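(* Let $l,m\in\mathbb{N}$ and let $q(x)=x^6-(l+m+3)x^4+(lm+l+m+3)x^2-1$. If $q(x)$ is reducible over $\mathbb{Q}$, then the set of all positive eigenvalues of the adjacency matrix of the double subdivided star $T_{l,m}$, with any one of them removed, is linearly independent over $\mathbb{Q}$.
   Context: A subdivided star $SK_{1,l}$ is obtained by identifying exactly one pendant (end) vertex from each of $l$ copies of the path $P_3$ on three vertices; the identified vertex is the coalescence vertex. The double subdivided star $T_{l,m}$ is obtained from $SK_{1,l}$ and $SK_{1,m}$ by adding one edge joining their two coalescence vertices. Eigenvalues are those of the adjacency matrix; the characteristic polynomial of $T_{l,m}$ is $(x^2-1)^{l+m-2}q(x)$. *)

theory Defs
  imports "Jordan_Normal_Form.Char_Poly" "HOL-Computational_Algebra.Polynomial_Factorial"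
begin

text \<open>Vertices of the double subdivided star T(l,m) are 0 ..< 2l+2m+2:
  vertex 0 is the coalescence vertex of SK(1,l), vertex 1 that of SK(1,m);
  for k < l the k-th P3 of SK(1,l) is 0 -- 2+2k -- 3+2k;
  for k < m the k-th P3 of SK(1,m) is 1 -- 2+2l+2k -- 3+2l+2k;
  the extra edge joins 0 and 1.\<close>

definition dss_edge :: "nat \<Rightarrow> nat \<Rightarrow> nat \<Rightarrow> nat \<Rightarrow> bool" where
  "dss_edge l m i j \<longleftrightarrow>
     (i = 0 \<and> j = 1)
   \<or> (\<exists>k<l. (i = 0 \<and> j = 2 + 2*k) \<or> (i = 2 + 2*k \<and> j = 3 + 2*k))
   \<or> (\<exists>k<m. (i = 1 \<and> j = 2 + 2*l + 2*k) \<or> (i = 2 + 2*l + 2*k \<and> j = 3 + 2*l + 2*k))"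

definition dss_adj :: "nat \<Rightarrow> nat \<Rightarrow> nat \<Rightarrow> nat \<Rightarrow> bool" where
  "dss_adj l m i j \<longleftrightarrow> dss_edge l m i j \<or> dss_edge l m j i"

definition dss_num_vertices :: "nat \<Rightarrow> nat \<Rightarrow> nat" where
  "dss_num_vertices l m = 2*l + 2*m + 2"

definition dss_adj_matrix :: "nat \<Rightarrow> nat \<Rightarrow> real mat" where
  "dss_adj_matrix l m = mat (dss_num_vertices l m) (dss_num_vertices l m)
     (\<lambda>(i, j). if dss_adj l m i j then 1 else 0)"

definition q_poly :: "nat \<Rightarrow> nat \<Rightarrow> rat poly" where
  "q_poly l m = [: -1, 0, of_nat (l*m + l + m + 3), 0, - of_nat (l + m + 3), 0, 1 :]"

definition Q_lin_indep :: "real set \<Rightarrow> bool" where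
  "Q_lin_indep S \<longleftrightarrow> (\<forall>T c. finite T \<longrightarrow> T \<subseteq> S \<longrightarrow>
      (\<Sum>x\<in>T. of_rat (c x) * x) = 0 \<longrightarrow> (\<forall>x\<in>T. c x = 0))"

end

theory Submission
  imports Defs "HOL-Computational_Algebra.Field_as_Ring"
begin

abbreviation ev :: "rat poly \<Rightarrow> 'a::field_char_0 \<Rightarrow> 'a" where
  "ev p z \<equiv> poly (map_poly of_rat p) z"

interpretation of_rat_poly_hom: map_poly_idom_hom of_rat ..

lemma rmult: "map_poly (of_rat :: rat \<Rightarrow> 'a::field_char_0) (p*q) = map_poly of_rat p * map_poly of_rat q"
  by (rule of_rat_poly_hom.hom_mult)

lemma radd: "map_poly (of_rat :: rat \<Rightarrow> 'a::field_char_0) (p+q) = map_poly of_rat p + map_poly of_rat q"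
  by (rule of_rat_poly_hom.hom_add)

lemma ev_mult: "ev (p*q) z = ev p z * ev q z"
  by (simp add: rmult)

lemma ev_pCons: "ev (pCons a p) z = of_rat a + z * ev p z"
  by (simp add: hom_distribs)

lemma irr_dvd:
  fixes z :: "'a::field_char_0"
  assumes "irreducible g" "ev g z = 0" "ev h z = 0"
  shows "g dvd h"
proof (rule ccontr)
  assume nd: "\<not> g dvd h"
  have "prime_elem g" using assms(1) by (rule field_poly_irreducible_imp_prime)
  then have "coprime g h" using nd by (rule prime_elem_imp_coprime)
  then have "gcd g h = 1" by simp
  then have eq: "fst (bezout_coefficients g h) * g + snd (bezout_coefficients g h) * h = 1"
    using bezout_coefficients_fst_snd[of g h] by simp
  have "ev (fst (bezout_coefficients g h) * g + snd (bezout_coefficients g h) * h) z = 0"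
    using assms by (simp add: rmult radd)
  then show False using eq by simp
qed

lemma deg1_root:
  fixes s :: "rat poly"
  assumes "degree s = 1"
  shows "\<exists>x. poly s x = 0"
proof -
  have "s \<noteq> 0" using assms by auto
  then have "lead_coeff s \<noteq> 0" by simp
  then have c1: "coeff s 1 \<noteq> 0" using assms by simp
  have "poly s (- coeff s 0 / coeff s 1) = coeff s 0 + coeff s 1 * (- coeff s 0 / coeff s 1)"
    using assms by (simp add: poly_altdef)
  also have "\<dots> = 0" using c1 by simp
  finally show ?thesis by blast
qed

lemma deg3_irred:
  fixes p :: "rat poly"
  assumes "degree p = 3" "\<And>x. poly p x \<noteq> 0"
  shows "irreducible p"
proof -
  have "irreducible\<^sub>d p"
  proof (rule irreducible\<^sub>dI)
    show "degree p > 0" using assms by simp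
    fix q r assume h: "degree q > 0" "degree q < degree p" "degree r > 0" "degree r < degree p" "p = q*r"
    then have "q \<noteq> 0" "r \<noteq> 0" by auto
    then have "degree q + degree r = 3" using h assms degree_mult_eq by metis
    hence "degree q = 1 \<or> degree r = 1" using h assms by arith
    then obtain x where "poly q x = 0 \<or> poly r x = 0" using deg1_root by blast
    then have "poly p x = 0" using h by auto
    then show False using assms by blast
  qed
  thus ?thesis by simp
qed

lemma t1:
  fixes y :: rat and A B n d :: int
  assumes "d > 0" "y = of_int n / of_int d"
  shows "of_int (n^3 - B * n^2 * d + A * n * d^2 - d^3) = (of_int d)^3 * (y^3 - of_int B * y^2 + of_int A * y - 1 :: rat)"
proof -
  have "(of_int d)^3 * (y^3 - of_int B * y^2 + of_int A * y - 1 :: rat) = 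
     (of_int d * y)^3 - of_int B * (of_int d * y)^2 * of_int d + of_int A * (of_int d * y) * (of_int d)^2 - (of_int d)^3"
    by (simp add: algebra_simps power2_eq_square power3_eq_cube)
  also have "of_int d * y = of_int n" using assms by simp
  finally show ?thesis by simp
qed

lemma t3: fixes d n :: int assumes "d dvd n^3" "coprime n d" "d > 0" shows "d = 1"
proof -
  have "coprime d (n^3)" using assms(2) by (simp add: coprime_commute)
  then have "d dvd 1" using assms(1) by (meson coprime_common_divisor dvd_refl) 
  thus ?thesis using assms(3) by simp
qed

lemma t4: fixes A B n :: int assumes eq: "n^3 - B * n^2 * 1 + A * n * 1^2 - 1^3 = 0"
  shows "n = 1 \<or> n = -1"
proof -
  have "n * (n^2 - B * n + A) = 1" using eq by (simp add: algebra_simps power2_eq_square power3_eq_cube)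
  hence "n dvd 1" unfolding dvd_def by (metis mult.commute)
  hence "\<bar>n\<bar> = 1" by simp
  thus "n = 1 \<or> n = -1" by arith
qed

lemma cubic_int_root:
  fixes y :: rat and A B :: int
  assumes "y^3 - of_int B * y^2 + of_int A * y - 1 = 0"
  shows "y = 1 \<or> y = -1"
proof -
  obtain n d where qd: "quotient_of y = (n, d)" by (cases "quotient_of y") auto
  have dpos: "d > 0" using qd by (rule quotient_of_denom_pos)
  have cop: "coprime n d" using qd by (rule quotient_of_coprime)
  have y: "y = of_int n / of_int d" using qd by (rule quotient_of_div)
  have "of_int (n^3 - B * n^2 * d + A * n * d^2 - d^3) = (0::rat)"
    using t1[OF dpos y, of B A] assms by simp
  hence eq: "n^3 - B * n^2 * d + A * n * d^2 - d^3 = 0" by (simp only: of_int_eq_0_iff)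
  have "n^3 = d * (B * n^2 - A * n * d + d^2)" using eq by (simp add: algebra_simps power2_eq_square power3_eq_cube)
  hence "d dvd n^3" by simp
  hence d1: "d = 1" using t3 cop dpos by blast
  have "n = 1 \<or> n = -1" using t4[of n B A] eq d1 by simp
  thus ?thesis using y d1 by auto
qed

lemma r_noroot:
  fixes y :: rat and l m :: nat
  assumes "l \<ge> 1" "m \<ge> 1"
  shows "y^3 - of_nat (l+m+3) * y^2 + of_nat (l*m+l+m+3) * y - 1 \<noteq> 0"
proof
  assume h: "y^3 - of_nat (l+m+3) * y^2 + of_nat (l*m+l+m+3) * y - 1 = 0"
  have "y^3 - of_int (int (l+m+3)) * y^2 + of_int (int (l*m+l+m+3)) * y - 1 = 0"
    using h by simp
  hence "y = 1 \<or> y = -1" by (rule cubic_int_root)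
  moreover have s: "rat_of_nat (l*m+l+m+3) = rat_of_nat (l*m) + rat_of_nat (l+m+3)" by simp
  moreover have "rat_of_nat (l*m) > 0" using assms by simp
  moreover have "rat_of_nat (l+m+3) \<ge> 0" by simp
  ultimately show False using h by (auto simp del: of_nat_add of_nat_mult)
qed
lemma poly3_expand:
  fixes f :: "'a::comm_ring_1 poly" assumes "degree f \<le> 3"
  shows "f = [:coeff f 0, coeff f 1, coeff f 2, coeff f 3:]"
proof (rule poly_eqI)
  fix n show "coeff f n = coeff [:coeff f 0, coeff f 1, coeff f 2, coeff f 3:] n"
    using assms by (auto simp: coeff_pCons coeff_eq_0 numeral_2_eq_2 numeral_3_eq_3 split: nat.split)
qed

lemma exists_abc:
  fixes l m :: nat
  assumes "l \<ge> 1" "m \<ge> 1" "\<not> irreducible (q_poly l m)"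
  shows "\<exists>a b c::rat. c^2 = 1 \<and> 2*a*c - b^2 = - of_nat (l*m+l+m+3) \<and> a^2 - 2*b = of_nat (l+m+3)"
proof -
  define A where "A = (of_nat (l*m+l+m+3) :: rat)"
  define B where "B = (of_nat (l+m+3) :: rat)"
  define r where "r = [:-1, A, -B, 1:]"
  have pr: "poly r x = x^3 - B*x^2 + A*x - 1" for x
    by (simp add: r_def algebra_simps power2_eq_square power3_eq_cube)
  have r_irr: "irreducible r"
  proof (rule deg3_irred)
    show "degree r = 3" by (simp add: r_def)
    fix x show "poly r x \<noteq> 0" using r_noroot[OF assms(1,2), of x] by (simp add: pr A_def B_def)
  qed
  have qdef: "q_poly l m = [:-1, 0, A, 0, -B, 0, 1:]" by (simp add: q_poly_def A_def B_def)
  have "\<not> irreducible\<^sub>d (q_poly l m)" using assms(3) by simp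
  moreover have dq: "degree (q_poly l m) = 6" by (simp add: qdef)
  ultimately obtain u v where uv: "degree u > 0" "degree u < 6" "degree v > 0" "degree v < 6" "q_poly l m = u * v"
    by (metis reducible\<^sub>dE zero_less_numeral less_numeral_extra(3))
  have "u \<noteq> 0" "v \<noteq> 0" using uv by auto
  hence duv: "degree u + degree v = 6" using uv dq degree_mult_eq by metis
  obtain f where f: "f dvd q_poly l m" "degree f > 0" "degree f \<le> 3"
  proof (cases "degree u \<le> 3")
    case True then show ?thesis using that[of u] uv by auto
  next
    case False then show ?thesis using that[of v] uv duv by auto
  qed
  obtain z :: complex where fz: "ev f z = 0"
  proof -
    have "\<not> (\<exists>a l. a \<noteq> 0 \<and> l = 0 \<and> map_poly (of_rat :: rat \<Rightarrow> complex) f = pCons a l)"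
    proof
      assume "\<exists>a l. a \<noteq> 0 \<and> l = 0 \<and> map_poly (of_rat :: rat \<Rightarrow> complex) f = pCons a l"
      then obtain a where "map_poly (of_rat :: rat \<Rightarrow> complex) f = [:a:]" by auto
      hence "degree (map_poly (of_rat :: rat \<Rightarrow> complex) f) = 0" by simp
      thus False using f(2) by simp
    qed
    from fundamental_theorem_of_algebra_alt[OF this] that show ?thesis by blast
  qed
  obtain k where fk: "q_poly l m = f * k" using f(1) by (elim dvdE)
  have "ev (q_poly l m) z = 0" using fz by (simp add: fk ev_mult)
  moreover have "ev (q_poly l m) z = z^6 - of_rat B * z^4 + of_rat A * z^2 - 1"
    by (simp add: qdef algebra_simps power2_eq_square power3_eq_cube numeral_eq_Suc of_rat_minus)
  moreover have "ev r (z^2) = z^6 - of_rat B * z^4 + of_rat A * z^2 - 1"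
    by (simp add: r_def algebra_simps power2_eq_square power3_eq_cube numeral_eq_Suc of_rat_minus)
  ultimately have rz: "ev r (z^2) = 0" by simp
  define f0 where "f0 = coeff f 0"
  define f1 where "f1 = coeff f 1"
  define f2 where "f2 = coeff f 2"
  define f3 where "f3 = coeff f 3"
  have fe: "f = [:f0, f1, f2, f3:]" unfolding f0_def f1_def f2_def f3_def using f(3) by (rule poly3_expand)
  define E where "E = [:f0^2, 2*f0*f2 - f1^2, f2^2 - 2*f1*f3, - (f3^2) :]"
  have evf: "ev f w = of_rat f0 + of_rat f1 * w + of_rat f2 * w^2 + of_rat f3 * w^3" for w :: complex
    by (subst fe) (simp add: ev_pCons algebra_simps power2_eq_square power3_eq_cube)
  have "ev E (z^2) = ev f z * ev f (-z)"
    by (simp add: evf E_def ev_pCons of_rat_mult of_rat_diff of_rat_power of_rat_minus algebra_simps power2_eq_square power3_eq_cube)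
  hence Ez: "ev E (z^2) = 0" using fz by simp
  have rE: "r dvd E" using r_irr rz Ez by (rule irr_dvd)
  have "E \<noteq> 0"
  proof
    assume "E = 0"
    hence "f0^2 = 0" "2*f0*f2 - f1^2 = 0" "f2^2 - 2*f1*f3 = 0" "- (f3^2) = 0" by (auto simp: E_def)
    hence "f0 = 0" "f3 = 0" "f2 = 0" "f1 = 0" by auto
    hence "f = 0" using fe by simp
    thus False using f(2) by simp
  qed
  obtain w where Ew: "E = r * w" using rE by (elim dvdE)
  have "w \<noteq> 0" using Ew \<open>E \<noteq> 0\<close> by auto
  moreover have "r \<noteq> 0" using r_irr by auto
  ultimately have "degree E = degree r + degree w" using Ew degree_mult_eq by metis
  moreover have "degree E \<le> 3" by (simp add: E_def)
  moreover have "degree r = 3" by (simp add: r_def)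
  ultimately have "degree w = 0" by simp
  then obtain w0 where "w = [:w0:]" by (elim degree_eq_zeroE)
  hence Es: "E = Polynomial.smult w0 r" using Ew by simp
  have c0: "f0^2 = -w0" using arg_cong[OF Es, of "\<lambda>p. coeff p 0"] by (simp add: E_def r_def)
  have c1: "2*f0*f2 - f1^2 = w0 * A" using arg_cong[OF Es, of "\<lambda>p. coeff p 1"] by (simp add: E_def r_def)
  have c2: "f2^2 - 2*f1*f3 = - w0 * B" using arg_cong[OF Es, of "\<lambda>p. coeff p 2"] by (simp add: E_def r_def numeral_eq_Suc)
  have c3: "- (f3^2) = w0" using arg_cong[OF Es, of "\<lambda>p. coeff p 3"] by (simp add: E_def r_def numeral_eq_Suc)
  have f3: "f3 \<noteq> 0"
  proof
    assume "f3 = 0"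
    hence "w0 = 0" using c3 by simp
    thus False using Es \<open>E \<noteq> 0\<close> by simp
  qed
  show ?thesis
  proof (intro exI conjI)
    show "(f0/f3)^2 = 1" using c0 c3 f3 by (simp add: power_divide field_simps)
    have "2*(f2/f3)*(f0/f3) - (f1/f3)^2 = (2*f0*f2 - f1^2) / f3^2"
      using f3 by (simp add: field_simps power2_eq_square)
    also have "\<dots> = - A" using c1 f3 unfolding c3[symmetric] by simp
    finally show "2*(f2/f3)*(f0/f3) - (f1/f3)^2 = - of_nat (l*m+l+m+3)" by (simp add: A_def)
    have "(f2/f3)^2 - 2*(f1/f3) = (f2^2 - 2*f1*f3) / f3^2"
      using f3 by (simp add: field_simps power2_eq_square)
    also have "\<dots> = B" using c2 f3 unfolding c3[symmetric] by simp
    finally show "(f2/f3)^2 - 2*(f1/f3) = of_nat (l+m+3)" by (simp add: B_def)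
  qed
qed
locale abc =
  fixes l m :: nat and a b c :: rat
  assumes lm1: "l \<ge> 1" and lm2: "m \<ge> 1"
    and rc: "c^2 = 1" and r1: "2*a*c - b^2 = - of_nat (l*m+l+m+3)" and r2: "a^2 - 2*b = of_nat (l+m+3)"
begin

definition G :: "real \<Rightarrow> real" where
  "G x = x^3 + of_rat a * x^2 + of_rat b * x + of_rat c"

definition Qr :: "real \<Rightarrow> real" where
  "Qr x = x^6 - real (l+m+3) * x^4 + real (l*m+l+m+3) * x^2 - 1"

lemma QG: "Qr x = - G x * G (-x)"
proof -
  have h2: "real (l+m+3) = of_rat a^2 - 2 * of_rat b"
    using arg_cong[OF r2, of "of_rat :: rat \<Rightarrow> real"] by (simp add: of_rat_diff of_rat_mult of_rat_power of_rat_add)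
  have h1: "real (l*m+l+m+3) = of_rat b^2 - 2 * of_rat a * of_rat c"
    using arg_cong[OF r1, of "of_rat :: rat \<Rightarrow> real"] by (simp add: of_rat_diff of_rat_mult of_rat_power of_rat_minus of_rat_add)
  have h0: "(of_rat c :: real)^2 = 1"
    using arg_cong[OF rc, of "of_rat :: rat \<Rightarrow> real"] by (simp add: of_rat_power)
  have "- G x * G (-x) = x^6 - (of_rat a^2 - 2 * of_rat b) * x^4 + (of_rat b^2 - 2 * of_rat a * of_rat c) * x^2 - (of_rat c)^2"
    unfolding G_def by (simp add: algebra_simps eval_nat_numeral)
  also have "\<dots> = Qr x" unfolding Qr_def h1 h2 h0 ..
  finally show ?thesis ..
qed

lemma no_rat_root: "G (of_rat w) \<noteq> 0"
proof
  assume "G (of_rat w) = 0"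
  hence "Qr (of_rat w) = 0" by (simp add: QG)
  hence "of_rat ((w^2)^3 - of_nat (l+m+3) * (w^2)^2 + of_nat (l*m+l+m+3) * w^2 - 1) = (0::real)"
    unfolding Qr_def by (simp add: of_rat_diff of_rat_mult of_rat_power of_rat_add power_mult[symmetric])
  hence "(w^2)^3 - of_nat (l+m+3) * (w^2)^2 + of_nat (l*m+l+m+3) * w^2 - 1 = 0"
    by (simp only: of_rat_eq_0_iff)
  thus False using r_noroot[OF lm1 lm2] by blast
qed

lemma evG: "ev [:c,b,a,1:] x = G x"
  by (simp add: ev_pCons G_def algebra_simps power2_eq_square power3_eq_cube)

lemma Gp_irr: "irreducible [:c,b,a,1:]"
proof (rule deg3_irred)
  show "degree [:c,b,a,1:] = 3" by simp
  fix x
  have "of_rat (poly [:c,b,a,1:] x) = G (of_rat x)"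
    by (simp add: G_def of_rat_add of_rat_mult of_rat_power algebra_simps power2_eq_square power3_eq_cube)
  thus "poly [:c,b,a,1:] x \<noteq> 0" using no_rat_root[of x] by auto
qed

lemma a_nz: "a \<noteq> 0"
proof
  assume a0: "a = 0"
  have e1: "2*b = - of_nat (l+m+3)" using r2 a0 by simp
  have e2: "b^2 = of_nat (l*m+l+m+3)" using r1 a0 by simp
  have "(of_nat (l+m+3))^2 = (2*b)^2" by (simp only: e1 power2_minus)
  also have "\<dots> = 4*b^2" by (simp add: power_mult_distrib)
  finally have "(of_nat (l+m+3))^2 = (4 * of_nat (l*m+l+m+3) :: rat)" using e2 by simp
  hence E: "(of_nat l + of_nat m + 3)^2 = 4 * (of_nat l * of_nat m + of_nat l + of_nat m + (3::rat))" by simp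
  define L where "L = (of_nat l :: rat)"
  define M where "M = (of_nat m :: rat)"
  have E2: "L*L + M*M + 2*L*M + 6*L + 6*M + 9 = 4*L*M + 4*L + 4*M + 12"
    using E unfolding L_def[symmetric] M_def[symmetric] by (simp add: algebra_simps power2_eq_square)
  have "(L - M)*(L-M) = L*L + M*M - 2*L*M" by (simp add: algebra_simps)
  moreover have "(L - M)*(L-M) \<ge> 0" by simp
  moreover have "L \<ge> 1" "M \<ge> 1" using lm1 lm2 by (auto simp: L_def M_def)
  ultimately show False using E2 by linarith
qed


lemma G_shift: "G (of_rat p + of_rat k * x) - (of_rat k)^3 * G x =
   of_rat (p^3 + a*p^2 + b*p + c - k^3*c) + of_rat (3*p^2*k + 2*a*p*k + b*k - b*k^3) * x
   + of_rat (3*p*k^2 + a*k^2 - a*k^3) * x^2"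
  unfolding G_def of_rat_add of_rat_mult of_rat_power of_rat_diff of_rat_numeral_eq by (simp add: algebra_simps eval_nat_numeral)

end
lemma rat_cube_one: fixes k :: rat assumes "k^3 = 1" shows "k = 1"
proof -
  have "(k - 1) * (k^2 + k + 1) = 0" using assms by (simp add: algebra_simps power2_eq_square power3_eq_cube)
  moreover have "k^2 + k + 1 > 0"
  proof -
    have "k^2 + k + 1 = (k + 1/2)^2 + 3/4" by (simp add: algebra_simps power2_eq_square)
    moreover have "(k + 1/2)^2 \<ge> 0" by simp
    ultimately show ?thesis by linarith
  qed
  ultimately show ?thesis by simp
qed

context abc
begin

lemma L:
  assumes g1: "G t1 = 0" and g2: "G t2 = 0" and ne: "t1 \<noteq> t2" and t2: "t2 = of_rat p + of_rat k * t1"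
  shows False
proof -
  define h0 where "h0 = p^3 + a*p^2 + b*p + c - k^3*c"
  define h1 where "h1 = 3*p^2*k + 2*a*p*k + b*k - b*k^3"
  define h2 where "h2 = 3*p*k^2 + a*k^2 - a*k^3"
  have sh: "G (of_rat p + of_rat k * x) - (of_rat k)^3 * G x = of_rat h0 + of_rat h1 * x + of_rat h2 * x^2" for x
    unfolding h0_def h1_def h2_def by (rule G_shift)
  have "ev [:h0,h1,h2:] t1 = 0" using sh[of t1] g1 g2 t2 by (simp add: ev_pCons algebra_simps power2_eq_square)
  moreover have "ev [:c,b,a,1:] t1 = 0" using g1 evG[of t1] by simp
  ultimately have dv: "[:c,b,a,1:] dvd [:h0,h1,h2:]" using irr_dvd[OF Gp_irr] by blast
  have "[:h0,h1,h2:] = 0"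
  proof (rule ccontr)
    assume "[:h0,h1,h2:] \<noteq> 0"
    from dvd_imp_degree_le[OF dv this] have "3 \<le> degree [:h0,h1,h2:]" by simp
    moreover have "degree [:h0,h1,h2:] \<le> 2"
      by (metis One_nat_def degree_pCons_le le_SucE le_trans numeral_2_eq_2 degree_pCons_0 Suc_le_mono)
    ultimately show False by simp
  qed
  hence hs: "h0 = 0" "h1 = 0" "h2 = 0" by auto
  have Gid: "G (of_rat p + of_rat k * x) = (of_rat k)^3 * G x" for x using sh[of x] hs by simp
  consider "k = 0" | "k = 1" | "k = -1" | "k \<noteq> 0 \<and> k \<noteq> 1 \<and> k \<noteq> -1" by blast
  then show False
  proof cases
    case 1
    then show False using g2 t2 no_rat_root[of p] by simp
  next
    case 2
    then have "p = 0" using hs(3) by (simp add: h2_def)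
    then show False using ne t2 2 by simp
  next
    case 3
    have "G (of_rat (p/2)) = - G (of_rat (p/2))"
      using Gid[of "of_rat (p/2)"] 3 by (simp add: of_rat_divide)
    then show False using no_rat_root[of "p/2"] by simp
  next
    case 4
    hence k0: "k \<noteq> 0" and k2: "k^2 \<noteq> 1" and k3: "k^3 \<noteq> 1"
      using rat_cube_one by (auto simp: power2_eq_1_iff)
    define j where "j = (k - 1) / 3"
    have kj: "k = 3*j + 1" by (simp add: j_def)
    have "k^2 * (3*p + a - a*k) = 0" using hs(3) by (simp add: h2_def algebra_simps power2_eq_square power3_eq_cube)
    hence "3*p + a - a*k = 0" using k0 by simp
    hence "3*p = a*(k-1)" by (simp add: algebra_simps)
    hence pj: "p = a*j" by (simp add: j_def)
    have "k * (3*p^2 + 2*a*p + b - b*k^2) = 0" using hs(2) by (simp add: h1_def algebra_simps power2_eq_square power3_eq_cube)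
    hence e1: "3*p^2 + 2*a*p + b - b*k^2 = 0" using k0 by simp
    have "(k^2-1)*(a^2-3*b) = 3*(3*p^2 + 2*a*p + b - b*k^2)"
      unfolding pj kj by (simp add: algebra_simps power2_eq_square)
    hence "(k^2-1)*(a^2-3*b) = 0" using e1 by simp
    hence b3: "3*b = a^2" using k2 by simp
    have "27*h0 = 27*a^3*j^3 + 27*a^3*j^2 + 9*(3*b)*a*j + 27*c - 27*c*k^3"
      unfolding h0_def pj by (simp add: algebra_simps power2_eq_square power3_eq_cube)
    also have "\<dots> = (k^3-1)*(a^3-27*c)"
      unfolding b3 kj by (simp add: algebra_simps power2_eq_square power3_eq_cube)
    finally have "(k^3-1)*(a^3-27*c) = 0" using hs(1) by simp
    hence c27: "27*c = a^3" using k3 by simp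
    have Gw: "G (of_rat w) = of_rat (w^3 + a*w^2 + b*w + c)" for w
      by (simp add: G_def of_rat_add of_rat_mult of_rat_power)
    have "G (of_rat (-a/3)) = of_rat ((-a/3)^3 + a*(-a/3)^2 + b*(-a/3) + c)"
      by (rule Gw)
    also have "(-a/3)^3 + a*(-a/3)^2 + b*(-a/3) + c = 0"
    proof -
      have bb: "b = a^2/3" using b3 by simp
      have cc: "c = a^3/27" using c27 by simp
      show ?thesis unfolding bb cc by (simp add: field_simps power2_eq_square power3_eq_cube)
    qed
    finally show False using no_rat_root[of "-a/3"] by simp
  qed
qed

end
context abc
begin

lemma One:
  assumes "G t = 0" "of_rat e0 + of_rat e1 * t = 0"
  shows "e1 = 0 \<and> e0 = 0"
proof -
  have "e1 = 0"
  proof (rule ccontr)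
    assume "e1 \<noteq> 0"
    hence "t = of_rat (- e0 / e1)" using assms(2) by (simp add: of_rat_divide of_rat_minus field_simps)
    thus False using assms(1) no_rat_root by simp
  qed
  thus ?thesis using assms(2) by simp
qed

lemma Two:
  assumes g1: "G t1 = 0" and g2: "G t2 = 0" and ne: "t1 \<noteq> t2"
    and eq: "of_rat e0 + of_rat e1 * t1 + of_rat e2 * t2 = 0"
  shows "e1 = 0 \<and> e2 = 0 \<and> e0 = 0"
proof -
  have "e2 = 0"
  proof (rule ccontr)
    assume "e2 \<noteq> 0"
    hence "t2 = of_rat (- e0 / e2) + of_rat (- e1 / e2) * t1" using eq
      by (simp add: of_rat_divide of_rat_minus field_simps)
    thus False using L[OF g1 g2 ne] by blast
  qed
  moreover have "e1 = 0"
  proof (rule ccontr)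
    assume "e1 \<noteq> 0"
    hence "t1 = of_rat (- e0 / e1) + of_rat (- e2 / e1) * t2" using eq
      by (simp add: of_rat_divide of_rat_minus field_simps)
    thus False using L[OF g2 g1] ne by metis
  qed
  ultimately show ?thesis using eq by simp
qed

lemma sum3:
  assumes g1: "G t1 = 0" and g2: "G t2 = 0" and g3: "G t3 = 0"
    and ne: "t1 \<noteq> t2" "t2 \<noteq> t3" "t1 \<noteq> t3"
  shows "t1 + t2 + t3 = - of_rat a"
proof -
  define A where "A = (of_rat a :: real)"
  define B where "B = (of_rat b :: real)"
  have d: "G x - G y = (x - y) * (x^2 + x*y + y^2 + A*(x+y) + B)" for x y
    unfolding G_def A_def B_def by (simp add: algebra_simps power2_eq_square power3_eq_cube)
  have s12: "t1^2 + t1*t2 + t2^2 + A*(t1+t2) + B = 0" using d[of t1 t2] g1 g2 ne by simp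
  have s13: "t1^2 + t1*t3 + t3^2 + A*(t1+t3) + B = 0" using d[of t1 t3] g1 g3 ne by simp
  have "(t2 - t3) * (t1 + t2 + t3 + A) = (t1^2 + t1*t2 + t2^2 + A*(t1+t2) + B) - (t1^2 + t1*t3 + t3^2 + A*(t1+t3) + B)"
    by (simp add: algebra_simps power2_eq_square)
  also have "\<dots> = 0" using s12 s13 by simp
  finally have "t1 + t2 + t3 + A = 0" using ne by simp
  thus ?thesis by (simp add: A_def)
qed

lemma Three:
  assumes g1: "G t1 = 0" and g2: "G t2 = 0" and g3: "G t3 = 0"
    and ne: "t1 \<noteq> t2" "t2 \<noteq> t3" "t1 \<noteq> t3"
    and eq: "of_rat e1 * t1 + of_rat e2 * t2 + of_rat e3 * t3 = 0"
  shows "e1 = 0 \<and> e2 = 0 \<and> e3 = 0"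
proof -
  have t3: "t3 = - of_rat a - t1 - t2" using sum3[OF g1 g2 g3 ne] by simp
  have "of_rat (- a * e3) + of_rat (e1 - e3) * t1 + of_rat (e2 - e3) * t2 = 0"
    using eq unfolding t3 by (simp add: of_rat_mult of_rat_minus of_rat_diff algebra_simps)
  from Two[OF g1 g2 ne(1) this] have "e1 = e3" "e2 = e3" "a * e3 = 0" by auto
  thus ?thesis using a_nz by simp
qed

lemma roots_card: "finite {t. G t = 0}" "card {t. G t = 0} \<le> 3"
proof -
  define P where "P = [:of_rat c, of_rat b, of_rat a, 1 :: real:]"
  have "poly P x = G x" for x by (simp add: P_def G_def algebra_simps power2_eq_square power3_eq_cube)
  hence eqs: "{t. G t = 0} = {x. poly P x = 0}" by simp
  have "P \<noteq> 0" by (simp add: P_def)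
  then show "finite {t. G t = 0}" unfolding eqs by (rule poly_roots_finite)
  have "card {x. poly P x = 0} \<le> degree P" using \<open>P \<noteq> 0\<close> by (rule card_poly_roots_bound)
  thus "card {t. G t = 0} \<le> 3" unfolding eqs by (simp add: P_def)
qed

lemma K:
  assumes U: "U \<subseteq> {t. G t = 0}" and eq: "of_rat e0 + (\<Sum>t\<in>U. of_rat (d t) * t) = 0"
    and cond: "e0 = 0 \<or> card U \<le> 2"
  shows "(\<forall>t\<in>U. d t = 0) \<and> e0 = 0"
proof -
  have fin: "finite U" using U roots_card(1) finite_subset by blast
  have "card U \<le> 3" using card_mono[OF roots_card(1) U] roots_card(2) by simp
  hence "card U = 0 \<or> card U = 1 \<or> card U = 2 \<or> card U = 3" by arith
  thus ?thesis
  proof (elim disjE)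
    assume "card U = 0"
    hence "U = {}" using fin by simp
    thus ?thesis using eq by simp
  next
    assume "card U = 1"
    then obtain t where "U = {t}" by (auto simp: card_1_singleton_iff)
    thus ?thesis using eq U One[of t e0 "d t"] by simp
  next
    assume "card U = 2"
    then obtain t1 t2 where "U = {t1, t2}" "t1 \<noteq> t2" by (auto simp: card_2_iff)
    thus ?thesis using eq U Two[of t1 t2 e0 "d t1" "d t2"] by (simp add: add.assoc)
  next
    assume c3: "card U = 3"
    hence e0: "e0 = 0" using cond by simp
    from c3 obtain t1 t2 t3 where u: "U = {t1, t2, t3}" "t1 \<noteq> t2" "t2 \<noteq> t3" "t1 \<noteq> t3"
      by (auto simp: card_3_iff)
    have "of_rat (d t1) * t1 + of_rat (d t2) * t2 + of_rat (d t3) * t3 = 0"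
      using eq e0 u by (simp add: add.assoc)
    thus ?thesis using u U Three[of t1 t2 t3 "d t1" "d t2" "d t3"] e0 by simp
  qed
qed

end
context abc
begin

lemma indep_main:
  assumes S: "S \<subseteq> {x. x > 0 \<and> (x = 1 \<or> Qr x = 0)}" and e: "e \<in> S"
  shows "Q_lin_indep (S - {e})"
  unfolding Q_lin_indep_def
proof (intro allI impI)
  fix T and cf :: "real \<Rightarrow> rat"
  assume fin: "finite T" and TS: "T \<subseteq> S - {e}" and sm: "(\<Sum>x\<in>T. of_rat (cf x) * x) = 0"
  define W where "W = T - {1}"
  define tau where "tau = (\<lambda>w::real. if G w = 0 then w else - w)"
  define d where "d = (\<lambda>t::real. cf \<bar>t\<bar> * (if t < 0 then -1 else 1))"
  have Wpos: "w \<in> W \<Longrightarrow> w > 0 \<and> Qr w = 0" for w using TS S unfolding W_def by auto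
  have tauG: "w \<in> W \<Longrightarrow> G (tau w) = 0" for w
    using Wpos[of w] QG[of w] by (auto simp: tau_def)
  have tauabs: "w \<in> W \<Longrightarrow> \<bar>tau w\<bar> = w" for w using Wpos[of w] by (auto simp: tau_def)
  have inj: "inj_on tau W" by (metis inj_onI tauabs)
  have trm: "w \<in> W \<Longrightarrow> of_rat (d (tau w)) * tau w = of_rat (cf w) * w" for w
    using Wpos[of w] by (auto simp: tau_def d_def of_rat_mult of_rat_minus)
  have sW: "(\<Sum>t\<in>tau ` W. of_rat (d t) * t) = (\<Sum>w\<in>W. of_rat (cf w) * w)"
    using sum.reindex[OF inj, of "\<lambda>t. of_rat (d t) * t"] trm by simp
  define e0 where "e0 = (if 1 \<in> T then cf 1 else 0)"
  have sT: "(\<Sum>x\<in>T. of_rat (cf x) * x) = of_rat e0 + (\<Sum>w\<in>W. of_rat (cf w) * w)"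
  proof (cases "1 \<in> T")
    case True
    then show ?thesis using sum.remove[OF fin True, of "\<lambda>x. of_rat (cf x) * x"] by (simp add: W_def e0_def)
  next
    case False
    then show ?thesis by (simp add: W_def e0_def)
  qed
  have U: "tau ` W \<subseteq> {t. G t = 0}" using tauG by auto
  have eq: "of_rat e0 + (\<Sum>t\<in>tau ` W. of_rat (d t) * t) = 0" using sm sT sW by simp
  have cond: "e0 = 0 \<or> card (tau ` W) \<le> 2"
  proof (cases "1 \<in> T")
    case False thus ?thesis by (simp add: e0_def)
  next
    case True
    hence "e \<noteq> 1" using TS by auto
    hence epos: "e > 0" "Qr e = 0" using e S by auto
    define te where "te = tau e"
    have Gte: "G te = 0" using epos QG[of e] by (auto simp: te_def tau_def)
    have "te \<notin> tau ` W"
    proof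
      assume "te \<in> tau ` W"
      then obtain w where w: "w \<in> W" "tau w = te" by auto
      have "\<bar>te\<bar> = e" using epos by (auto simp: te_def tau_def)
      hence "w = e" using tauabs[OF w(1)] w(2) by simp
      thus False using w(1) TS W_def by auto
    qed
    hence "tau ` W \<subseteq> {t. G t = 0} - {te}" using U by auto
    hence "card (tau ` W) \<le> card ({t. G t = 0} - {te})" using roots_card(1) by (intro card_mono) auto
    also have "\<dots> = card {t. G t = 0} - 1" using Gte roots_card(1) by (simp add: card_Diff_singleton)
    also have "\<dots> \<le> 2" using roots_card(2) by simp
    finally show ?thesis by simp
  qed
  from K[OF U eq cond] have dz: "\<forall>t\<in>tau ` W. d t = 0" and e0z: "e0 = 0" by auto
  show "\<forall>x\<in>T. cf x = 0"
  proof
    fix x assume xT: "x \<in> T"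
    show "cf x = 0"
    proof (cases "x = 1")
      case True thus ?thesis using e0z xT by (simp add: e0_def)
    next
      case False
      hence xW: "x \<in> W" using xT by (simp add: W_def)
      hence "d (tau x) = 0" using dz by auto
      moreover have "of_rat (d (tau x)) * tau x = of_rat (cf x) * x" using trm[OF xW] .
      ultimately show ?thesis using Wpos[OF xW] by simp
    qed
  qed
qed

end
lemma nb_leaf1: "k < l \<Longrightarrow> {j \<in> {0..<dss_num_vertices l m}. dss_adj l m (3+2*k) j} = {2+2*k}"
  unfolding dss_adj_def dss_edge_def dss_num_vertices_def by auto presburger+

lemma nb_mid1: "k < l \<Longrightarrow> {j \<in> {0..<dss_num_vertices l m}. dss_adj l m (2+2*k) j} = {0, 3+2*k}"
  unfolding dss_adj_def dss_edge_def dss_num_vertices_def by auto presburger+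

lemma nb_leaf2: "k < m \<Longrightarrow> {j \<in> {0..<dss_num_vertices l m}. dss_adj l m (3+2*l+2*k) j} = {2+2*l+2*k}"
  unfolding dss_adj_def dss_edge_def dss_num_vertices_def by auto presburger+

lemma nb_mid2: "k < m \<Longrightarrow> {j \<in> {0..<dss_num_vertices l m}. dss_adj l m (2+2*l+2*k) j} = {1, 3+2*l+2*k}"
  unfolding dss_adj_def dss_edge_def dss_num_vertices_def by auto presburger+

lemma nb_0: "{j \<in> {0..<dss_num_vertices l m}. dss_adj l m 0 j} = insert 1 ((\<lambda>k. 2+2*k) ` {..<l})"
  unfolding dss_adj_def dss_edge_def dss_num_vertices_def by auto

lemma nb_1: "{j \<in> {0..<dss_num_vertices l m}. dss_adj l m 1 j} = insert 0 ((\<lambda>k. 2+2*l+2*k) ` {..<m})"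
  unfolding dss_adj_def dss_edge_def dss_num_vertices_def by auto

lemma vertex_cases: "j < dss_num_vertices l m \<Longrightarrow> j = 0 \<or> j = 1 \<or> (\<exists>k<l. j = 2+2*k \<or> j = 3+2*k) \<or> (\<exists>k<m. j = 2+2*l+2*k \<or> j = 3+2*l+2*k)"
  unfolding dss_num_vertices_def by presburger
lemma eig_rows:
  assumes v: "v \<in> carrier_vec (dss_num_vertices l m)"
    and ev: "dss_adj_matrix l m *\<^sub>v v = x \<cdot>\<^sub>v v"
    and i: "i < dss_num_vertices l m"
  shows "(\<Sum>j \<in> {j \<in> {0..<dss_num_vertices l m}. dss_adj l m i j}. v $ j) = x * v $ i"
proof -
  let ?N = "dss_num_vertices l m"
  have dv: "dim_vec v = ?N" using v by simp
  have "(dss_adj_matrix l m *\<^sub>v v) $ i = x * v $ i" using ev i dv by (metis index_smult_vec(1))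
  moreover have "(dss_adj_matrix l m *\<^sub>v v) $ i = (\<Sum>j \<in> {0..<?N}. (if dss_adj l m i j then 1 else 0) * v $ j)"
    using i dv by (simp add: dss_adj_matrix_def scalar_prod_def)
  moreover have "(\<Sum>j \<in> {0..<?N}. (if dss_adj l m i j then 1 else 0) * v $ j) = (\<Sum>j \<in> {0..<?N}. if dss_adj l m i j then v $ j else 0)"
    by (rule sum.cong) auto
  moreover have "(\<Sum>j \<in> {0..<?N}. if dss_adj l m i j then v $ j else 0) = (\<Sum>j \<in> {j \<in> {0..<?N}. dss_adj l m i j}. v $ j)"
    by (rule sum.inter_filter[symmetric]) simp
  ultimately show ?thesis by simp
qed

lemma eig_poly:
  assumes ev: "eigenvalue (dss_adj_matrix l m) x"
  shows "x^2 = 1 \<or> x^6 - real (l+m+3) * x^4 + real (l*m+l+m+3) * x^2 - 1 = 0"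
proof (rule ccontr)
  assume nc: "\<not> ?thesis"
  define D where "D = x^2 - 1"
  have D0: "D \<noteq> 0" using nc by (simp add: D_def)
  have nq: "x^6 - real (l+m+3) * x^4 + real (l*m+l+m+3) * x^2 - 1 \<noteq> 0" using nc by simp
  define N where "N = dss_num_vertices l m"
  obtain v where v: "v \<in> carrier_vec N" "v \<noteq> 0\<^sub>v N" "dss_adj_matrix l m *\<^sub>v v = x \<cdot>\<^sub>v v"
    using ev unfolding eigenvalue_def eigenvector_def by (auto simp: dss_adj_matrix_def N_def)
  note R = eig_rows[OF v(1)[unfolded N_def] v(3)]
  have N: "N = 2*l+2*m+2" by (simp add: N_def dss_num_vertices_def)
  have leafA: "k < l \<Longrightarrow> v $ (3+2*k) = v $ 0 / D \<and> v $ (2+2*k) = x * v $ 0 / D" for k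
  proof -
    assume k: "k < l"
    have a1: "v $ (2+2*k) = x * v $ (3+2*k)" using R[of "3+2*k", unfolded nb_leaf1[OF k]] k by (simp add: dss_num_vertices_def)
    have a2: "v $ 0 + v $ (3+2*k) = x * v $ (2+2*k)" using R[of "2+2*k", unfolded nb_mid1[OF k]] k by (simp add: dss_num_vertices_def)
    have "D * v $ (3+2*k) = x * (x * v $ (3+2*k)) - v $ (3+2*k)" by (simp add: D_def algebra_simps power2_eq_square)
    also have "\<dots> = x * v $ (2+2*k) - v $ (3+2*k)" by (simp only: a1[symmetric])
    also have "\<dots> = v $ 0" using a2 by simp
    finally have "D * v $ (3+2*k) = v $ 0" .
    hence "v $ (3+2*k) = v $ 0 / D" using D0 by (metis nonzero_mult_div_cancel_left)
    thus ?thesis using a1 by simp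
  qed
  have leafB: "k < m \<Longrightarrow> v $ (3+2*l+2*k) = v $ 1 / D \<and> v $ (2+2*l+2*k) = x * v $ 1 / D" for k
  proof -
    assume k: "k < m"
    have a1: "v $ (2+2*l+2*k) = x * v $ (3+2*l+2*k)" using R[of "3+2*l+2*k", unfolded nb_leaf2[OF k]] k by (simp add: dss_num_vertices_def)
    have a2: "v $ 1 + v $ (3+2*l+2*k) = x * v $ (2+2*l+2*k)" using R[of "2+2*l+2*k", unfolded nb_mid2[OF k]] k by (simp add: dss_num_vertices_def)
    have "D * v $ (3+2*l+2*k) = x * (x * v $ (3+2*l+2*k)) - v $ (3+2*l+2*k)" by (simp add: D_def algebra_simps power2_eq_square)
    also have "\<dots> = x * v $ (2+2*l+2*k) - v $ (3+2*l+2*k)" by (simp only: a1[symmetric])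
    also have "\<dots> = v $ 1" using a2 by simp
    finally have "D * v $ (3+2*l+2*k) = v $ 1" .
    hence "v $ (3+2*l+2*k) = v $ 1 / D" using D0 by (metis nonzero_mult_div_cancel_left)
    thus ?thesis using a1 by simp
  qed
  have c0: "v $ 1 + real l * (x * v $ 0 / D) = x * v $ 0"
  proof -
    have "(\<Sum>j \<in> insert 1 ((\<lambda>k. 2+2*k) ` {..<l}). v $ j) = x * v $ 0"
      using R[of 0, unfolded nb_0] by (simp add: dss_num_vertices_def)
    moreover have "(\<Sum>j \<in> insert 1 ((\<lambda>k. 2+2*k) ` {..<l}). v $ j) = v $ 1 + (\<Sum>k<l. v $ (2+2*k))"
      by (subst sum.insert) (auto simp: sum.reindex inj_on_def)
    moreover have "(\<Sum>k<l. v $ (2+2*k)) = real l * (x * v $ 0 / D)"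
      using leafA by simp
    ultimately show ?thesis by simp
  qed
  have c1: "v $ 0 + real m * (x * v $ 1 / D) = x * v $ 1"
  proof -
    have "(\<Sum>j \<in> insert 0 ((\<lambda>k. 2+2*l+2*k) ` {..<m}). v $ j) = x * v $ 1"
      using R[of 1, unfolded nb_1] by (simp add: dss_num_vertices_def)
    moreover have "(\<Sum>j \<in> insert 0 ((\<lambda>k. 2+2*l+2*k) ` {..<m}). v $ j) = v $ 0 + (\<Sum>k<m. v $ (2+2*l+2*k))"
      by (subst sum.insert) (auto simp: sum.reindex inj_on_def)
    moreover have "(\<Sum>k<m. v $ (2+2*l+2*k)) = real m * (x * v $ 1 / D)"
      using leafB by simp
    ultimately show ?thesis by simp
  qed
  have e0: "v $ 1 * D = x * v $ 0 * (D - real l)"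
  proof -
    have "v $ 1 * D + real l * (x * v $ 0 / D) * D = x * v $ 0 * D" using c0 by (metis distrib_right)
    moreover have "real l * (x * v $ 0 / D) * D = real l * x * v $ 0" using D0 by simp
    ultimately show ?thesis by (simp add: algebra_simps)
  qed
  have e1: "v $ 0 * D = x * v $ 1 * (D - real m)"
  proof -
    have "v $ 0 * D + real m * (x * v $ 1 / D) * D = x * v $ 1 * D" using c1 by (metis distrib_right)
    moreover have "real m * (x * v $ 1 / D) * D = real m * x * v $ 1" using D0 by simp
    ultimately show ?thesis by (simp add: algebra_simps)
  qed
  have "v $ 0 * D * D = (x * v $ 1 * (D - real m)) * D" using e1 by simp
  also have "\<dots> = x * (v $ 1 * D) * (D - real m)" by (simp add: algebra_simps)
  also have "\<dots> = x * (x * v $ 0 * (D - real l)) * (D - real m)" using e0 by simp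
  finally have "v $ 0 * (D * D - x * x * (D - real l) * (D - real m)) = 0" by (simp add: algebra_simps)
  moreover have "D * D - x * x * (D - real l) * (D - real m) = - (x^6 - real (l+m+3) * x^4 + real (l*m+l+m+3) * x^2 - 1)"
    unfolding D_def by (simp add: algebra_simps eval_nat_numeral)
  ultimately have v0: "v $ 0 = 0" using nq by simp
  hence v1: "v $ 1 = 0" using c0 by simp
  have "v = 0\<^sub>v N"
  proof (rule eq_vecI)
    show "dim_vec v = dim_vec (0\<^sub>v N)" using v(1) by simp
    fix j assume "j < dim_vec (0\<^sub>v N)"
    hence j: "j < dss_num_vertices l m" by (simp add: N_def)
    show "v $ j = 0\<^sub>v N $ j"
      using vertex_cases[OF j] leafA leafB v0 v1 j by (auto simp: N_def)
  qed
  thus False using v(2) by simp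
qed
theorem theorem2p2:
  fixes l m :: nat
  assumes "l \<ge> 1" and "m \<ge> 1"
    and "\<not> irreducible (q_poly l m)"
  shows "\<forall>e \<in> {x::real. x > 0 \<and> eigenvalue (dss_adj_matrix l m) x}.
           Q_lin_indep ({x::real. x > 0 \<and> eigenvalue (dss_adj_matrix l m) x} - {e})"
proof
  fix e assume e: "e \<in> {x::real. x > 0 \<and> eigenvalue (dss_adj_matrix l m) x}"
  obtain a b c :: rat where abc: "c^2 = 1" "2*a*c - b^2 = - of_nat (l*m+l+m+3)" "a^2 - 2*b = of_nat (l+m+3)"
    using exists_abc[OF assms] by blast
  interpret abc l m a b c using assms(1,2) abc by unfold_locales
  have sub: "{x::real. x > 0 \<and> eigenvalue (dss_adj_matrix l m) x} \<subseteq> {x. x > 0 \<and> (x = 1 \<or> Qr x = 0)}"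
  proof
    fix x assume x: "x \<in> {x::real. x > 0 \<and> eigenvalue (dss_adj_matrix l m) x}"
    hence "x^2 = 1 \<or> Qr x = 0" using eig_poly[of l m x] by (simp add: Qr_def)
    moreover have "x^2 = 1 \<Longrightarrow> x = 1" using x by (simp add: power2_eq_1_iff)
    ultimately show "x \<in> {x. x > 0 \<and> (x = 1 \<or> Qr x = 0)}" using x by auto
  qed
  show "Q_lin_indep ({x::real. x > 0 \<and> eigenvalue (dss_adj_matrix l m) x} - {e})"
    by (rule indep_main[OF sub e])
qed
end
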